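(* If $r$ divides $s$, then each of $\nu(n,P^{(r)}_s)$, $\nu^*(n,P^{(r)}_s)$ and $\tau^*(n,P^{(r)}_s)$ equals $\left(\left(\frac{r}{s}\right)^r+o(1)\right)\binom{n}{r}$, where $o(1)\to0$ as $n\to\infty$ with $r,s$ fixed.
   Context: $K^{(r)}_n$ is the ordered complete $r$-uniform hypergraph on $[n]=\{1,\dots,n\}$ with its natural order; a copy of an ordered hypergraph $H$ in $K^{(r)}_n$ is the image of $H$ under an order-preserving injection $V(H)\to[n]$. The natural path $P^{(r)}_s$ has vertices $v_1<\dots<v_s$ and edges all sets of $r$ consecutive vertices $\{v_j,\dots,v_{j+r-1}\}$, $1\le j\le s-r+1$. $\nu(n,H)$ is the maximum number of pairwise edge-disjoint copies of $H$ in $K^{(r)}_n$. A fractional $H$-transversal is a function $w:E(K^{(r)}_n)\to[0,\infty)$ with $\sum_{e\in E(H')}w(e)\ge1$ for every copy $H'$ of $H$; $\tau^*(n,H)$ is the minimum total weight of a fractional $H$-transversal. A fractional $H$-packing is an assignment of weights $w(H')\ge0$ to the copies $H'$ of $H$ in $K^{(r)}_n$ such that for each edge $e$ of $K^{(r)}_n$ the total weight of copies containing $e$ is at most $1$; $\nu^*(n,H)$ is the maximum total weight of a fractional $H$-packing. *)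

theory Defs
  imports Complex_Main
begin

definition Kedges :: "nat \<Rightarrow> nat \<Rightarrow> nat set set" where
  "Kedges n r = {e. e \<subseteq> {1..n} \<and> card e = r}"

text \<open>The path has vertices v_0 < ... < v_(s-1) (indexed from 0 here) and edges
  {v_j,...,v_(j+r-1)} for j + r \<le> s; a copy is the image under an
  order-preserving injection f into {1..n}.\<close>
definition path_copies :: "nat \<Rightarrow> nat \<Rightarrow> nat \<Rightarrow> nat set set set" where
  "path_copies n r s =
     {{f ` {j..<j+r} | j. j + r \<le> s} | f.
        strict_mono_on {0..<s} f \<and> f ` {0..<s} \<subseteq> {1..n}}"

definition nu_path :: "nat \<Rightarrow> nat \<Rightarrow> nat \<Rightarrow> nat" where
  "nu_path n r s = Max {card C | C. C \<subseteq> path_copies n r s \<and>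
      (\<forall>A\<in>C. \<forall>B\<in>C. A \<noteq> B \<longrightarrow> A \<inter> B = {})}"

definition nu_star_path :: "nat \<Rightarrow> nat \<Rightarrow> nat \<Rightarrow> real" where
  "nu_star_path n r s = Sup {(\<Sum>P\<in>path_copies n r s. w P) | w.
      (\<forall>P\<in>path_copies n r s. 0 \<le> w P) \<and>
      (\<forall>e\<in>Kedges n r. (\<Sum>P\<in>{P\<in>path_copies n r s. e \<in> P}. w P) \<le> 1)}"

definition tau_star_path :: "nat \<Rightarrow> nat \<Rightarrow> nat \<Rightarrow> real" where
  "tau_star_path n r s = Inf {(\<Sum>e\<in>Kedges n r. w e) | w.
      (\<forall>e\<in>Kedges n r. 0 \<le> w e) \<and>
      (\<forall>P\<in>path_copies n r s. (\<Sum>e\<in>P. w e) \<ge> 1)}"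

end

theory Submission
  imports Defs
begin


lemma div_ratio_lim:
  fixes k c :: nat assumes k: "0 < k"
  shows "(\<lambda>n. (real (n div k + c)) / real n) \<longlonglongrightarrow> 1 / real k"
proof -
  have lo: "(\<lambda>n. 1 / real k - 1 / real n) \<longlonglongrightarrow> 1 / real k"
    using tendsto_diff[OF tendsto_const lim_const_over_n[of 1]] by simp
  have hi: "(\<lambda>n. 1 / real k + (real c + 1) / real n) \<longlonglongrightarrow> 1 / real k"
    using tendsto_add[OF tendsto_const lim_const_over_n[of "real c + 1"]] by simp
  have e: "eventually (\<lambda>n. 1 / real k - 1 / real n \<le> real (n div k + c) / real n
       \<and> real (n div k + c) / real n \<le> 1 / real k + (real c + 1) / real n) sequentially"
    using eventually_gt_at_top[of 0]
  proof eventually_elim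
    case (elim n)
    have nk: "real n = real k * real (n div k) + real (n mod k)"
      by (metis of_nat_add of_nat_mult div_mult_mod_eq mult.commute)
    have m: "real (n mod k) < real k" using k by simp
    have d1: "real n / real k - 1 \<le> real (n div k)"
      using nk m k by (simp add: field_simps)
    have d2: "real (n div k) \<le> real n / real k"
      using nk k by (simp add: field_simps)
    have np: "real n > 0" using elim by simp
    show ?case
    proof
      have "1 / real k - 1 / real n = (real n / real k - 1) / real n" using np by (simp add: field_simps)
      also have "\<dots> \<le> real (n div k + c) / real n"
        using d1 np by (intro divide_right_mono) auto
      finally show "1 / real k - 1 / real n \<le> real (n div k + c) / real n" .
      have "real (n div k + c) / real n \<le> (real n / real k + real c) / real n"
        using d2 np by (intro divide_right_mono) auto
      also have "\<dots> \<le> 1 / real k + (real c + 1) / real n" using np by (simp add: field_simps)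
      finally show "real (n div k + c) / real n \<le> 1 / real k + (real c + 1) / real n" .
    qed
  qed
  show ?thesis
    by (rule tendsto_sandwich[OF _ _ lo hi]) (use e in \<open>auto elim: eventually_mono\<close>)
qed

lemma choose_ratio:
  assumes "r \<le> n"
  shows "real (m choose r) / real (n choose r) = (\<Prod>i<r. (real m - real i) / (real n - real i))"
proof -
  have "real (m choose r) / real (n choose r) = (\<Prod>i<r. (real m - real i)) / (\<Prod>i<r. (real n - real i))"
    by (simp add: binomial_gbinomial gbinomial_prod_rev atLeast0LessThan)
  also have "\<dots> = (\<Prod>i<r. (real m - real i) / (real n - real i))"
    by (simp add: prod_dividef)
  finally show ?thesis .
qed

lemma choose_ratio_lim:
  fixes k c r :: nat assumes k: "0 < k"
  shows "(\<lambda>n. real ((n div k + c) choose r) / real (n choose r)) \<longlonglongrightarrow> (1 / real k) ^ r"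
proof -
  have f: "(\<lambda>n. (real (n div k + c) / real n - real i / real n) / (1 - real i / real n))
     \<longlonglongrightarrow> (1 / real k - 0) / (1 - 0)" for i
    by (intro tendsto_intros div_ratio_lim k lim_const_over_n) auto
  have p: "(\<lambda>n. \<Prod>i<r. (real (n div k + c) / real n - real i / real n) / (1 - real i / real n))
     \<longlonglongrightarrow> (\<Prod>i<r. 1 / real k)"
    using tendsto_prod[of "{..<r}", OF f] by simp
  have ev: "eventually (\<lambda>n. (\<Prod>i<r. (real (n div k + c) / real n - real i / real n) / (1 - real i / real n))
      = real ((n div k + c) choose r) / real (n choose r)) sequentially"
    using eventually_ge_at_top[of "Suc r"]
  proof eventually_elim
    case (elim n)
    have np: "real n > 0" using elim by simp
    have "(\<Prod>i<r. (real (n div k + c) / real n - real i / real n) / (1 - real i / real n))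
        = (\<Prod>i<r. (real (n div k + c) - real i) / (real n - real i))"
    proof (intro prod.cong refl)
      fix i assume "i \<in> {..<r}"
      then have ni: "real n - real i > 0" using elim by simp
      have a: "1 - real i / real n = (real n - real i) / real n" using np by (simp add: field_simps)
      have b: "real (n div k + c) / real n - real i / real n = (real (n div k + c) - real i) / real n"
        using np by (simp add: field_simps)
      show "(real (n div k + c) / real n - real i / real n) / (1 - real i / real n)
          = (real (n div k + c) - real i) / (real n - real i)"
        unfolding a b using np ni by simp
    qed
    then show ?case using choose_ratio[of r n "n div k + c"] elim by simp
  qed
  show ?thesis using Lim_transform_eventually[OF p ev] by simp
qed


lemma path_edge_K:
  assumes "P \<in> path_copies n r s" "e \<in> P" shows "e \<in> Kedges n r"
proof -
  from assms obtain f where f: "strict_mono_on {0..<s} f" "f ` {0..<s} \<subseteq> {1..n}"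
    and P: "P = {f ` {j..<j+r} | j. j + r \<le> s}" unfolding path_copies_def by blast
  from assms(2) P obtain j where j: "j + r \<le> s" "e = f ` {j..<j+r}" by blast
  have sub: "{j..<j+r} \<subseteq> {0..<s}" using j by auto
  have "inj_on f {j..<j+r}" using strict_mono_on_imp_inj_on[OF f(1)] inj_on_subset[OF _ sub] by blast
  then have "card e = r" using j by (simp add: card_image)
  moreover have "e \<subseteq> {1..n}" using j sub f(2) by blast
  ultimately show ?thesis unfolding Kedges_def by blast
qed

lemma path_sub_K: "P \<in> path_copies n r s \<Longrightarrow> P \<subseteq> Kedges n r"
  using path_edge_K by blast

lemma finite_K: "finite (Kedges n r)"
  unfolding Kedges_def by (rule finite_subset[of _ "Pow {1..n}"]) auto

lemma finite_paths: "finite (path_copies n r s)"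
proof (rule finite_subset[of _ "Pow (Kedges n r)"])
  show "path_copies n r s \<subseteq> Pow (Kedges n r)" using path_sub_K by blast
  show "finite (Pow (Kedges n r))" using finite_K by simp
qed

lemma path_nonempty:
  assumes "P \<in> path_copies n r s" "r \<le> s" shows "P \<noteq> {}"
proof -
  from assms(1) obtain f where f: "strict_mono_on {0..<s} f" "f ` {0..<s} \<subseteq> {1..n}"
    and P: "P = {f ` {j..<j+r} | j. j + r \<le> s}" unfolding path_copies_def by blast
  have "f ` {0..<0+r} \<in> P" unfolding P using assms(2) by (intro CollectI exI[of _ 0]) simp
  then show ?thesis by blast
qed

lemma weak_duality:
  fixes w :: "nat set set \<Rightarrow> real" and t :: "nat set \<Rightarrow> real"
  assumes rs: "r \<le> s"
    and w0: "\<forall>P\<in>path_copies n r s. 0 \<le> w P"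
    and w1: "\<forall>e\<in>Kedges n r. (\<Sum>P\<in>{P\<in>path_copies n r s. e \<in> P}. w P) \<le> 1"
    and t0: "\<forall>e\<in>Kedges n r. 0 \<le> t e"
    and t1: "\<forall>P\<in>path_copies n r s. (\<Sum>e\<in>P. t e) \<ge> 1"
  shows "(\<Sum>P\<in>path_copies n r s. w P) \<le> (\<Sum>e\<in>Kedges n r. t e)"
proof -
  let ?Q = "path_copies n r s" and ?K = "Kedges n r"
  have "(\<Sum>P\<in>?Q. w P) \<le> (\<Sum>P\<in>?Q. w P * (\<Sum>e\<in>P. t e))"
  proof (intro sum_mono)
    fix P assume "P \<in> ?Q"
    then have "0 \<le> w P" "1 \<le> (\<Sum>e\<in>P. t e)" using w0 t1 by auto
    then have "w P * 1 \<le> w P * (\<Sum>e\<in>P. t e)" by (rule mult_left_mono[rotated])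
    then show "w P \<le> w P * (\<Sum>e\<in>P. t e)" by simp
  qed
  also have "\<dots> = (\<Sum>P\<in>?Q. \<Sum>e\<in>{e\<in>?K. e \<in> P}. w P * t e)"
  proof (intro sum.cong refl)
    fix P assume "P \<in> ?Q"
    then have "{e\<in>?K. e \<in> P} = P" using path_sub_K by blast
    then show "w P * (\<Sum>e\<in>P. t e) = (\<Sum>e\<in>{e\<in>?K. e \<in> P}. w P * t e)"
      by (simp add: sum_distrib_left)
  qed
  also have "\<dots> = (\<Sum>e\<in>?K. \<Sum>P\<in>{P\<in>?Q. e \<in> P}. w P * t e)"
    by (rule sum.swap_restrict[OF finite_paths finite_K])
  also have "\<dots> = (\<Sum>e\<in>?K. t e * (\<Sum>P\<in>{P\<in>?Q. e \<in> P}. w P))"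
    by (simp add: sum_distrib_left mult.commute)
  also have "\<dots> \<le> (\<Sum>e\<in>?K. t e)"
    using t0 w1 by (intro sum_mono) (simp add: mult_left_le)
  finally show ?thesis .
qed

lemma tau_set_ne: "r \<le> s \<Longrightarrow> (\<lambda>_. 1) \<in> {w. (\<forall>e\<in>Kedges n r. 0 \<le> w e) \<and>
      (\<forall>P\<in>path_copies n r s. (\<Sum>e\<in>P. w e) \<ge> (1::real))}"
proof -
  assume rs: "r \<le> s"
  have "(\<Sum>e\<in>P. 1::real) \<ge> 1" if "P \<in> path_copies n r s" for P
  proof -
    have "finite P" using finite_subset[OF path_sub_K[OF that] finite_K] .
    then have "card P \<ge> 1" using path_nonempty[OF that rs] by (simp add: Suc_le_eq card_gt_0_iff)
    then show ?thesis by simp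
  qed
  then show ?thesis by (intro CollectI conjI) simp_all
qed

lemma nu_star_le_tau_star:
  assumes "r \<le> s" shows "nu_star_path n r s \<le> tau_star_path n r s"
  unfolding nu_star_path_def
proof (rule cSup_least)
  show "{(\<Sum>P\<in>path_copies n r s. w P) | w.
      (\<forall>P\<in>path_copies n r s. 0 \<le> w P) \<and>
      (\<forall>e\<in>Kedges n r. (\<Sum>P\<in>{P\<in>path_copies n r s. e \<in> P}. w P) \<le> (1::real))} \<noteq> {}"
  proof -
    have "(\<Sum>P\<in>path_copies n r s. (\<lambda>_. 0::real) P) \<in> {(\<Sum>P\<in>path_copies n r s. w P) | w.
      (\<forall>P\<in>path_copies n r s. 0 \<le> w P) \<and>
      (\<forall>e\<in>Kedges n r. (\<Sum>P\<in>{P\<in>path_copies n r s. e \<in> P}. w P) \<le> 1)}"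
      by (rule CollectI, rule exI[of _ "\<lambda>_. 0::real"]) simp
    then show ?thesis by (metis empty_iff)
  qed
next
  fix x assume "x \<in> {(\<Sum>P\<in>path_copies n r s. w P) | w.
      (\<forall>P\<in>path_copies n r s. 0 \<le> w P) \<and>
      (\<forall>e\<in>Kedges n r. (\<Sum>P\<in>{P\<in>path_copies n r s. e \<in> P}. w P) \<le> (1::real))}"
  then obtain w where x: "x = (\<Sum>P\<in>path_copies n r s. w P)" and
      w0: "\<forall>P\<in>path_copies n r s. 0 \<le> w P" and
      w1: "\<forall>e\<in>Kedges n r. (\<Sum>P\<in>{P\<in>path_copies n r s. e \<in> P}. w P) \<le> 1" by blast
  show "x \<le> tau_star_path n r s" unfolding tau_star_path_def
  proof (rule cInf_greatest)
    show "{(\<Sum>e\<in>Kedges n r. w e) | w.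
      (\<forall>e\<in>Kedges n r. 0 \<le> w e) \<and>
      (\<forall>P\<in>path_copies n r s. (\<Sum>e\<in>P. w e) \<ge> (1::real))} \<noteq> {}"
    proof -
      have "(\<Sum>e\<in>Kedges n r. (\<lambda>_. 1::real) e) \<in> {(\<Sum>e\<in>Kedges n r. w e) | w.
      (\<forall>e\<in>Kedges n r. 0 \<le> w e) \<and>
      (\<forall>P\<in>path_copies n r s. (\<Sum>e\<in>P. w e) \<ge> (1::real))}"
        using tau_set_ne[OF assms, of n] by (intro CollectI exI[of _ "\<lambda>_. 1::real"]) simp
      then show ?thesis by (metis empty_iff)
    qed
  next
    fix y assume "y \<in> {(\<Sum>e\<in>Kedges n r. w e) | w.
      (\<forall>e\<in>Kedges n r. 0 \<le> w e) \<and>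
      (\<forall>P\<in>path_copies n r s. (\<Sum>e\<in>P. w e) \<ge> (1::real))}"
    then obtain t where y: "y = (\<Sum>e\<in>Kedges n r. t e)" and t0: "\<forall>e\<in>Kedges n r. 0 \<le> t e"
      and t1: "\<forall>P\<in>path_copies n r s. (\<Sum>e\<in>P. t e) \<ge> 1" by blast
    show "x \<le> y" unfolding x y by (rule weak_duality[OF assms w0 w1 t0 t1])
  qed
qed

lemma nu_star_bdd:
  assumes "r \<le> s" shows "bdd_above {(\<Sum>P\<in>path_copies n r s. w P) | w.
      (\<forall>P\<in>path_copies n r s. 0 \<le> w P) \<and>
      (\<forall>e\<in>Kedges n r. (\<Sum>P\<in>{P\<in>path_copies n r s. e \<in> P}. w P) \<le> (1::real))}"
proof (rule bdd_aboveI)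
  fix x assume "x \<in> {(\<Sum>P\<in>path_copies n r s. w P) | w.
      (\<forall>P\<in>path_copies n r s. 0 \<le> w P) \<and>
      (\<forall>e\<in>Kedges n r. (\<Sum>P\<in>{P\<in>path_copies n r s. e \<in> P}. w P) \<le> (1::real))}"
  then obtain w where x: "x = (\<Sum>P\<in>path_copies n r s. w P)" and
      w0: "\<forall>P\<in>path_copies n r s. 0 \<le> w P" and
      w1: "\<forall>e\<in>Kedges n r. (\<Sum>P\<in>{P\<in>path_copies n r s. e \<in> P}. w P) \<le> 1" by blast
  have t1: "\<forall>P\<in>path_copies n r s. 1 \<le> (\<Sum>e\<in>P. (1::real))"
    using tau_set_ne[OF assms, of n] by simp
  have t0: "\<forall>e\<in>Kedges n r. 0 \<le> (1::real)" by simp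
  show "x \<le> (\<Sum>e\<in>Kedges n r. 1)" unfolding x
    by (rule weak_duality[OF assms w0 w1 t0 t1])
qed

lemma nu_le_nu_star:
  assumes "r \<le> s" shows "real (nu_path n r s) \<le> nu_star_path n r s"
proof -
  let ?S = "{card C | C. C \<subseteq> path_copies n r s \<and>
      (\<forall>A\<in>C. \<forall>B\<in>C. A \<noteq> B \<longrightarrow> A \<inter> B = {})}"
  have fin: "finite ?S"
  proof (rule finite_subset[of _ "card ` Pow (path_copies n r s)"])
    show "?S \<subseteq> card ` Pow (path_copies n r s)" by blast
    show "finite (card ` Pow (path_copies n r s))" using finite_paths by simp
  qed
  have "card {} \<in> ?S" by (rule CollectI, rule exI[of _ "{}"]) simp
  then have ne: "?S \<noteq> {}" by blast
  have "nu_path n r s \<in> ?S" unfolding nu_path_def by (rule Max_in[OF fin ne])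
  then obtain C where c: "nu_path n r s = card C" and C: "C \<subseteq> path_copies n r s"
    and D: "\<forall>A\<in>C. \<forall>B\<in>C. A \<noteq> B \<longrightarrow> A \<inter> B = {}" by blast
  define w where "w = (\<lambda>P. if P \<in> C then (1::real) else 0)"
  have fC: "finite C" using C finite_paths finite_subset by blast
  have w0: "\<forall>P\<in>path_copies n r s. 0 \<le> w P" by (simp add: w_def)
  have sC: "(\<Sum>P\<in>path_copies n r s. w P) = real (card C)"
    unfolding w_def using C finite_paths by (simp add: sum.If_cases Int_absorb1)
  moreover have w1: "(\<Sum>P\<in>{P\<in>path_copies n r s. e \<in> P}. w P) \<le> 1" for e
  proof -
    have "(\<Sum>P\<in>{P\<in>path_copies n r s. e \<in> P}. w P) = real (card ({P\<in>path_copies n r s. e \<in> P} \<inter> C))"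
      unfolding w_def by (simp add: sum.If_cases finite_paths)
    moreover have "card ({P\<in>path_copies n r s. e \<in> P} \<inter> C) \<le> 1"
    proof -
      have fin: "finite ({P\<in>path_copies n r s. e \<in> P} \<inter> C)" using fC by simp
      have "\<forall>x\<in>{P\<in>path_copies n r s. e \<in> P} \<inter> C. \<forall>y\<in>{P\<in>path_copies n r s. e \<in> P} \<inter> C. x = y"
        using D by blast
      then show ?thesis using card_le_Suc0_iff_eq[OF fin] by simp
    qed
    ultimately show ?thesis by simp
  qed
  have "real (card C) \<in> {(\<Sum>P\<in>path_copies n r s. w P) | w.
      (\<forall>P\<in>path_copies n r s. 0 \<le> w P) \<and>
      (\<forall>e\<in>Kedges n r. (\<Sum>P\<in>{P\<in>path_copies n r s. e \<in> P}. w P) \<le> 1)}"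
    by (rule CollectI, rule exI[of _ w]) (use sC w1 w0 in simp)
  then show ?thesis unfolding c nu_star_path_def by (rule cSup_upper[OF _ nu_star_bdd[OF assms]])
qed



lemma window_count_block:
  fixes g :: "nat \<Rightarrow> nat"
  assumes mono: "\<And>i j. i \<le> j \<Longrightarrow> j < L \<Longrightarrow> g i \<le> g j" and r: "0 < r"
  shows "int (card {i. i < L \<and> g i = b}) - (int r - 1)
     \<le> int (card {j. j + r \<le> L \<and> g j = b \<and> g (j + r - 1) = b})"
proof (cases "{i. i < L \<and> g i = b} = {}")
  case True
  then have "card {i. i < L \<and> g i = b} = 0" by (simp only: card.empty)
  then have h: "int (card {i. i < L \<and> g i = b}) = 0" by simp
  have "0 \<le> int (card {j. j + r \<le> L \<and> g j = b \<and> g (j + r - 1) = b})" by simp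
  then show ?thesis using r h by linarith
next
  case False
  let ?I = "{i. i < L \<and> g i = b}" and ?G = "{j. j + r \<le> L \<and> g j = b \<and> g (j + r - 1) = b}"
  have fI: "finite ?I" by simp
  define lo where "lo = Min ?I"
  define hi where "hi = Max ?I"
  have lo: "lo \<in> ?I" unfolding lo_def using Min_in[OF fI False] .
  have hi: "hi \<in> ?I" unfolding hi_def using Max_in[OF fI False] .
  have sub: "?I \<subseteq> {lo..hi}" unfolding lo_def hi_def using fI by (auto intro: Min_le Max_ge)
  have cI: "card ?I \<le> Suc hi - lo" using card_mono[OF _ sub] by simp
  show ?thesis
  proof (cases "lo + r \<le> Suc hi")
    case False
    have "lo \<le> hi" using sub lo by auto
    then have "card ?I \<le> r - 1" using cI False by linarith
    then have "int (card ?I) \<le> int r - 1" using r by linarith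
    moreover have "0 \<le> int (card ?G)" by simp
    ultimately show ?thesis by linarith
  next
    case True
    have "{lo..Suc hi - r} \<subseteq> ?G"
    proof
      fix j assume j: "j \<in> {lo..Suc hi - r}"
      have l1: "j + r \<le> L" using j True hi by auto
      have a: "b \<le> g j" using mono[of lo j] j lo l1 r by auto
      have b': "g j \<le> b" using mono[of j hi] j hi True r by auto
      have c: "b \<le> g (j + r - 1)" using mono[of lo "j + r - 1"] j lo l1 r by auto
      have d: "g (j + r - 1) \<le> b" using mono[of "j + r - 1" hi] j hi True r by auto
      show "j \<in> ?G" using l1 a b' c d by auto
    qed
    moreover have "finite ?G" by (rule finite_subset[of _ "{..L}"]) auto
    ultimately have "card {lo..Suc hi - r} \<le> card ?G" by (rule card_mono[rotated])
    then show ?thesis using cI True by simp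
  qed
qed

lemma window_count:
  fixes g :: "nat \<Rightarrow> nat"
  assumes mono: "\<And>i j. i \<le> j \<Longrightarrow> j < L \<Longrightarrow> g i \<le> g j"
    and bnd: "\<And>i. i < L \<Longrightarrow> g i < K" and r: "0 < r"
  shows "int L - int K * (int r - 1) \<le> int (card {j. j + r \<le> L \<and> g j = g (j + r - 1)})"
proof -
  define I where "I b = {i. i < L \<and> g i = b}" for b
  define G where "G b = {j. j + r \<le> L \<and> g j = b \<and> g (j + r - 1) = b}" for b
  have fG: "finite (G b)" for b unfolding G_def by (rule finite_subset[of _ "{..L}"]) auto
  have fI: "finite (I b)" for b unfolding I_def by simp
  have GU: "{j. j + r \<le> L \<and> g j = g (j + r - 1)} = (\<Union>b\<in>{..<K}. G b)"
  proof (rule set_eqI, rule iffI)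
    fix j assume "j \<in> {j. j + r \<le> L \<and> g j = g (j + r - 1)}"
    then have "j + r \<le> L" "g j = g (j + r - 1)" by auto
    moreover then have "g j < K" using bnd[of j] r by auto
    ultimately show "j \<in> (\<Union>b\<in>{..<K}. G b)" unfolding G_def by auto
  qed (auto simp: G_def)
  have IU: "{..<L} = (\<Union>b\<in>{..<K}. I b)" unfolding I_def using bnd by auto
  have cG: "card {j. j + r \<le> L \<and> g j = g (j + r - 1)} = (\<Sum>b<K. card (G b))"
    unfolding GU
  proof (rule card_UN_disjoint)
    show "\<forall>i\<in>{..<K}. finite (G i)" using fG by blast
    show "\<forall>i\<in>{..<K}. \<forall>j\<in>{..<K}. i \<noteq> j \<longrightarrow> G i \<inter> G j = {}" unfolding G_def by auto
  qed simp
  have cI: "L = (\<Sum>b<K. card (I b))"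
  proof -
    have "card {..<L} = (\<Sum>b<K. card (I b))" unfolding IU
    proof (rule card_UN_disjoint)
      show "\<forall>i\<in>{..<K}. finite (I i)" using fI by blast
      show "\<forall>i\<in>{..<K}. \<forall>j\<in>{..<K}. i \<noteq> j \<longrightarrow> I i \<inter> I j = {}" unfolding I_def by auto
    qed simp
    then show ?thesis by simp
  qed
  have "int L - int K * (int r - 1) = (\<Sum>b<K. int (card (I b)) - (int r - 1))"
    unfolding cI by (simp add: sum_subtractf)
  also have "\<dots> \<le> (\<Sum>b<K. int (card (G b)))"
    by (intro sum_mono) (unfold I_def G_def, rule window_count_block[OF mono r])
  also have "\<dots> = int (card {j. j + r \<le> L \<and> g j = g (j + r - 1)})"
    unfolding cG by simp
  finally show ?thesis .
qed


lemma tau_upper: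
  assumes r: "0 < r" and k: "0 < k" and s: "s = k * r"
  shows "tau_star_path n r s \<le> real ((n div k + 1) choose r)"
proof -
  define M where "M = n div k + 1"
  have M0: "0 < M" unfolding M_def by simp
  define blk where "blk x = (x - 1) div M" for x :: nat
  define same where "same e = (\<forall>x\<in>e. \<forall>y\<in>e. blk x = blk y)" for e :: "nat set"
  define t where "t e = (if same e then 1 / real k else 0)" for e
  have nM: "n - 1 < k * M"
  proof -
    have e: "n = k * (n div k) + n mod k" by simp
    have m: "n mod k < k" using k by simp
    have "k * M = k * (n div k) + k" unfolding M_def by (simp add: algebra_simps)
    then show ?thesis using e m k by linarith
  qed
  have blk_lt: "blk x < k" if "x \<in> {1..n}" for x
  proof -
    have "x - 1 < k * M" using that nM by auto
    then show ?thesis unfolding blk_def using M0 by (simp add: div_less_iff_less_mult mult.commute)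
  qed
  have t0: "\<forall>e\<in>Kedges n r. 0 \<le> t e" unfolding t_def by simp
  have t1: "\<forall>P\<in>path_copies n r s. (\<Sum>e\<in>P. t e) \<ge> 1"
  proof
    fix P assume P: "P \<in> path_copies n r s"
    then obtain f where f: "strict_mono_on {0..<s} f" "f ` {0..<s} \<subseteq> {1..n}"
      and Pf: "P = {f ` {j..<j+r} | j. j + r \<le> s}" unfolding path_copies_def by blast
    define g where "g i = blk (f i)" for i
    have fmono: "f i \<le> f j" if "i \<le> j" "j < s" for i j
    proof (cases "i = j")
      case False then show ?thesis using f(1) that by (auto simp: strict_mono_on_def intro: less_imp_le)
    qed simp
    have gmono: "g i \<le> g j" if "i \<le> j" "j < s" for i j
      unfolding g_def blk_def by (intro div_le_mono diff_le_mono fmono that)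
    have gb: "g i < k" if "i < s" for i
    proof -
      have "i \<in> {0..<s}" using that by simp
      then have "f i \<in> {1..n}" using f(2) by blast
      then show ?thesis unfolding g_def by (rule blk_lt)
    qed
    define G where "G = {j. j + r \<le> s \<and> g j = g (j + r - 1)}"
    have "int s - int k * (int r - 1) \<le> int (card G)"
      unfolding G_def by (rule window_count[OF gmono gb r])
    then have cG: "k \<le> card G" unfolding s using r by (simp add: algebra_simps)
    define E where "E j = f ` {j..<j+r}" for j
    have EP: "E ` G \<subseteq> P"
    proof
      fix e assume "e \<in> E ` G"
      then obtain j where j: "j \<in> G" "e = E j" by blast
      then have "j + r \<le> s" unfolding G_def by simp
      then show "e \<in> P" unfolding Pf j(2) E_def by blast
    qed
    have Esame: "same (E j)" if "j \<in> G" for j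
    proof -
      have j: "j + r \<le> s" "g j = g (j + r - 1)" using that unfolding G_def by auto
      have "g a = g j" if "a \<in> {j..<j+r}" for a
        using gmono[of j a] gmono[of a "j + r - 1"] that j by auto
      note ga = this
      show ?thesis unfolding same_def E_def
      proof (intro ballI)
        fix x y assume "x \<in> f ` {j..<j+r}" "y \<in> f ` {j..<j+r}"
        then obtain a b where ab: "a \<in> {j..<j+r}" "b \<in> {j..<j+r}" "x = f a" "y = f b" by blast
        have "g a = g b" using ga[OF ab(1)] ga[OF ab(2)] by simp
        then show "blk x = blk y" unfolding g_def ab(3,4) .
      qed
    qed
    have Einj: "inj_on E G"
    proof (rule inj_onI)
      fix a b assume a: "a \<in> G" and b: "b \<in> G" and eq: "E a = E b"
      show "a = b"
      proof (rule ccontr)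
        assume "a \<noteq> b"
        then consider "a < b" | "b < a" by linarith
        then show False
        proof cases
          case 1
          have "f a \<in> E a" unfolding E_def using r by auto
          then have "f a \<in> E b" using eq by simp
          then obtain c where c: "c \<in> {b..<b+r}" "f a = f c" unfolding E_def by blast
          have "c < s" using c b unfolding G_def by auto
          then have "f a < f c" using strict_mono_onD[OF f(1), of a c] 1 c by auto
          then show False using c by simp
        next
          case 2
          have "f b \<in> E b" unfolding E_def using r by auto
          then have "f b \<in> E a" using eq by simp
          then obtain c where c: "c \<in> {a..<a+r}" "f b = f c" unfolding E_def by blast
          have "c < s" using c a unfolding G_def by auto
          then have "f b < f c" using strict_mono_onD[OF f(1), of b c] 2 c by auto
          then show False using c by simp
        qed
      qed
    qed
    have fP: "finite P" using finite_subset[OF path_sub_K[OF P] finite_K] .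
    have "1 \<le> real (card G) / real k" using cG k by simp
    also have "\<dots> = (\<Sum>j\<in>G. t (E j))" using Esame unfolding t_def by simp
    also have "\<dots> = (\<Sum>e\<in>E ` G. t e)" using sum.reindex[OF Einj, of t] by simp
    also have "\<dots> \<le> (\<Sum>e\<in>P. t e)"
      by (rule sum_mono2[OF fP EP]) (simp add: t_def)
    finally show "(\<Sum>e\<in>P. t e) \<ge> 1" .
  qed
  define B where "B b = {x \<in> {1..n}. blk x = b}" for b
  have cB: "card (B b) \<le> M" for b
  proof -
    have "B b \<subseteq> {b * M + 1..b * M + M}"
    proof
      fix x assume "x \<in> B b"
      then have x: "x \<ge> 1" "(x - 1) div M = b" unfolding B_def blk_def by auto
      have dm: "(x - 1) div M * M + (x - 1) mod M = x - 1" by (rule div_mult_mod_eq)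
      have mm: "(x - 1) mod M < M" using M0 by (rule mod_less_divisor)
      have "b * M + (x - 1) mod M = x - 1" using dm unfolding x(2) .
      then have "b * M \<le> x - 1" by linarith
      moreover have "x - 1 < b * M + M"
      proof -
        have "b * M + (x - 1) mod M = x - 1" using dm unfolding x(2) .
        then show ?thesis using mm by linarith
      qed
      ultimately show "x \<in> {b * M + 1..b * M + M}" using x(1) by auto
    qed
    then have "card (B b) \<le> card {b * M + 1..b * M + M}" by (rule card_mono[OF finite_atLeastAtMost])
    then show ?thesis by simp
  qed
  have sameK: "{e \<in> Kedges n r. same e} \<subseteq> (\<Union>b\<in>{..<k}. {e. e \<subseteq> B b \<and> card e = r})"
  proof
    fix e assume e: "e \<in> {e \<in> Kedges n r. same e}"
    then have e1: "e \<subseteq> {1..n}" "card e = r" "same e" unfolding Kedges_def by auto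
    then have "e \<noteq> {}" using r by auto
    then obtain x where x: "x \<in> e" by blast
    have "blk x < k" using blk_lt[of x] x e1(1) by blast
    moreover have "e \<subseteq> B (blk x)"
    proof
      fix y assume "y \<in> e"
      then show "y \<in> B (blk x)" using e1 x unfolding B_def same_def by blast
    qed
    ultimately show "e \<in> (\<Union>b\<in>{..<k}. {e. e \<subseteq> B b \<and> card e = r})" using e1 by auto
  qed
  have "card {e \<in> Kedges n r. same e} \<le> card (\<Union>b\<in>{..<k}. {e. e \<subseteq> B b \<and> card e = r})"
  proof (rule card_mono[OF _ sameK])
    have "finite {e. e \<subseteq> B b \<and> card e = r}" for b
      by (rule finite_subset[of _ "Pow (B b)"]) (auto simp: B_def)
    then show "finite (\<Union>b\<in>{..<k}. {e. e \<subseteq> B b \<and> card e = r})" by blast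
  qed
  also have "\<dots> \<le> (\<Sum>b<k. card {e. e \<subseteq> B b \<and> card e = r})" by (rule card_UN_le) simp
  also have "\<dots> = (\<Sum>b<k. card (B b) choose r)" by (intro sum.cong refl n_subsets) (simp add: B_def)
  also have "\<dots> \<le> (\<Sum>b<k. M choose r)" by (intro sum_mono binomial_right_mono cB)
  also have "\<dots> = k * (M choose r)" by simp
  finally have cS: "card {e \<in> Kedges n r. same e} \<le> k * (M choose r)" .
  have "(\<Sum>e\<in>Kedges n r. t e) = (\<Sum>e\<in>{e \<in> Kedges n r. same e}. 1 / real k)"
    unfolding t_def by (rule sum.inter_filter[symmetric, OF finite_K])
  also have "\<dots> = real (card {e \<in> Kedges n r. same e}) / real k" by simp
  also have "\<dots> \<le> real (k * (M choose r)) / real k"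
  proof (rule divide_right_mono)
    show "real (card {e \<in> Kedges n r. same e}) \<le> real (k * (M choose r))" using cS by (simp only: of_nat_le_iff)
  qed simp
  also have "\<dots> = real (M choose r)" using k by simp
  finally have tot: "(\<Sum>e\<in>Kedges n r. t e) \<le> real (M choose r)" .
  have "tau_star_path n r s \<le> (\<Sum>e\<in>Kedges n r. t e)"
    unfolding tau_star_path_def
  proof (rule cInf_lower)
    show "(\<Sum>e\<in>Kedges n r. t e) \<in> {(\<Sum>e\<in>Kedges n r. w e) | w.
      (\<forall>e\<in>Kedges n r. 0 \<le> w e) \<and>
      (\<forall>P\<in>path_copies n r s. (\<Sum>e\<in>P. w e) \<ge> (1::real))}"
      using t0 t1 by (intro CollectI exI[of _ t]) simp
    show "bdd_below {(\<Sum>e\<in>Kedges n r. w e) | w.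
      (\<forall>e\<in>Kedges n r. 0 \<le> w e) \<and>
      (\<forall>P\<in>path_copies n r s. (\<Sum>e\<in>P. w e) \<ge> (1::real))}"
    proof (rule bdd_belowI)
      fix y assume "y \<in> {(\<Sum>e\<in>Kedges n r. w e) | w.
      (\<forall>e\<in>Kedges n r. 0 \<le> w e) \<and>
      (\<forall>P\<in>path_copies n r s. (\<Sum>e\<in>P. w e) \<ge> (1::real))}"
      then obtain w where "y = (\<Sum>e\<in>Kedges n r. w e)" "\<forall>e\<in>Kedges n r. 0 \<le> w e" by blast
      then show "0 \<le> y" by (simp add: sum_nonneg)
    qed
  qed
  then show ?thesis using tot unfolding M_def by linarith
qed



lemma mod_image_interval:
  assumes r: "0 < (r::nat)" shows "(\<lambda>i. i mod r) ` {j..<j+r} = {0..<r}"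
proof
  show "(\<lambda>i. i mod r) ` {j..<j+r} \<subseteq> {0..<r}" using r by auto
  show "{0..<r} \<subseteq> (\<lambda>i. i mod r) ` {j..<j+r}"
  proof
    fix t assume t: "t \<in> {0..<r}"
    define d where "d = (t + r - j mod r) mod r"
    have dr: "d < r" unfolding d_def using r by simp
    have jm: "j mod r < r" using r by simp
    have "(j + d) mod r = (j + (t + r - j mod r)) mod r" unfolding d_def by (simp add: mod_add_right_eq)
    also have "j + (t + r - j mod r) = (j div r) * r + (t + r)"
      using jm div_mult_mod_eq[of j r] by linarith
    also have "((j div r) * r + (t + r)) mod r = t" using t by simp
    finally have "(j + d) mod r = t" .
    moreover have "j + d \<in> {j..<j+r}" using dr by simp
    ultimately show "t \<in> (\<lambda>i. i mod r) ` {j..<j+r}" by (metis image_eqI)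
  qed
qed

lemma nu_lower:
  assumes r: "0 < r" and k: "0 < k" and s: "s = k * r"
  shows "(n div k) choose r \<le> nu_path n r s"
proof -
  define m where "m = n div k"
  define Xs where "Xs = {X. X \<subseteq> {1..m} \<and> card X = r}"
  define fX where "fX X i = sorted_list_of_set X ! (i mod r) + (i div r) * m" for X i
  define cp where "cp X = {fX X ` {j..<j+r} | j. j + r \<le> s}" for X
  have km: "k * m \<le> n" unfolding m_def by simp
  have Xfacts: "finite X" "length (sorted_list_of_set X) = r" "set (sorted_list_of_set X) = X"
    "sorted_wrt (<) (sorted_list_of_set X)" if "X \<in> Xs" for X
  proof -
    have fin: "finite X" using that unfolding Xs_def using finite_subset by blast
    then show "finite X" .
    show "length (sorted_list_of_set X) = r" using that unfolding Xs_def by simp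
    show "set (sorted_list_of_set X) = X" using fin by simp
    show "sorted_wrt (<) (sorted_list_of_set X)" by (rule strict_sorted_list_of_set)
  qed
  have xin: "sorted_list_of_set X ! t \<in> {1..m}" if "X \<in> Xs" "t < r" for X t
  proof -
    have "sorted_list_of_set X ! t \<in> set (sorted_list_of_set X)"
      using Xfacts(2)[OF that(1)] that(2) by (intro nth_mem) simp
    then show ?thesis using Xfacts(3)[OF that(1)] that(1) unfolding Xs_def by blast
  qed
  have res: "(fX X i - 1) mod m + 1 = sorted_list_of_set X ! (i mod r)" if "X \<in> Xs" for X i
  proof -
    let ?a = "sorted_list_of_set X ! (i mod r)"
    have a: "?a \<in> {1..m}" using xin[OF that] r by simp
    have "fX X i - 1 = (?a - 1) + (i div r) * m" unfolding fX_def using a by simp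
    then have "(fX X i - 1) mod m = (?a - 1) mod m" by simp
    also have "\<dots> = ?a - 1" using a by (intro mod_less) auto
    finally show ?thesis using a by simp
  qed
  have img: "(\<lambda>y. (y - 1) mod m + 1) ` (fX X ` {j..<j+r}) = X" if "X \<in> Xs" for X j
  proof -
    have "(\<lambda>y. (y - 1) mod m + 1) ` (fX X ` {j..<j+r}) = (\<lambda>i. sorted_list_of_set X ! (i mod r)) ` {j..<j+r}"
      unfolding image_image using res[OF that] by simp
    also have "\<dots> = (\<lambda>t. sorted_list_of_set X ! t) ` ((\<lambda>i. i mod r) ` {j..<j+r})"
      by (simp add: image_image)
    also have "\<dots> = (\<lambda>t. sorted_list_of_set X ! t) ` {0..<r}" using mod_image_interval[OF r] by simp
    also have "\<dots> = set (sorted_list_of_set X)"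
      using Xfacts(2)[OF that] by (simp add: set_conv_nth atLeast0LessThan image_def) blast
    also have "\<dots> = X" using Xfacts(3)[OF that] .
    finally show ?thesis .
  qed
  have cp_in: "cp X \<in> path_copies n r s" if X: "X \<in> Xs" for X
  proof -
    have sm: "strict_mono_on {0..<s} (fX X)"
    proof (rule strict_mono_onI)
      fix i i' assume i: "i \<in> {0..<s}" and i': "i' \<in> {0..<s}" and lt: "i < i'"
      have q: "i div r \<le> i' div r" using lt by (simp add: div_le_mono)
      show "fX X i < fX X i'"
      proof (cases "i div r = i' div r")
        case True
        have e1: "i div r * r + i mod r = i" by (rule div_mult_mod_eq)
        have e2: "i div r * r + i' mod r = i'" using div_mult_mod_eq[of i' r] True by simp
        have "i mod r < i' mod r" using lt e1 e2 by linarith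
        moreover have "i' mod r < r" using r by simp
        ultimately have "sorted_list_of_set X ! (i mod r) < sorted_list_of_set X ! (i' mod r)"
          using sorted_wrt_nth_less[OF Xfacts(4)[OF X]] Xfacts(2)[OF X] by simp
        then show ?thesis unfolding fX_def using True by simp
      next
        case False
        then have q1: "i div r + 1 \<le> i' div r" using q by simp
        have a1: "sorted_list_of_set X ! (i mod r) \<le> m" using xin[OF X, of "i mod r"] r by simp
        have a2: "1 \<le> sorted_list_of_set X ! (i' mod r)" using xin[OF X, of "i' mod r"] r by simp
        have "fX X i \<le> m + (i div r) * m" unfolding fX_def using a1 by simp
        also have "\<dots> = (i div r + 1) * m" by simp
        also have "\<dots> \<le> (i' div r) * m" using q1 by (rule mult_right_mono) simp
        also have "\<dots> < fX X i'" unfolding fX_def using a2 by simp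
        finally show ?thesis .
      qed
    qed
    have rng: "fX X ` {0..<s} \<subseteq> {1..n}"
    proof
      fix y assume "y \<in> fX X ` {0..<s}"
      then obtain i where i: "i < s" "y = fX X i" by auto
      have a: "sorted_list_of_set X ! (i mod r) \<in> {1..m}" using xin[OF X, of "i mod r"] r by simp
      have "i div r < k" using i(1) s r by (simp add: div_less_iff_less_mult)
      then have "i div r \<le> k - 1" by simp
      then have h1: "(i div r) * m \<le> (k - 1) * m" by (rule mult_right_mono) simp
      have h2: "m + (k - 1) * m = k * m" using k by (cases k) simp_all
      have h3: "y = sorted_list_of_set X ! (i mod r) + (i div r) * m" using i(2) unfolding fX_def .
      have a': "sorted_list_of_set X ! (i mod r) \<le> m" using a by simp
      have "y \<le> k * m" using h1 h2 h3 a' by linarith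
      then show "y \<in> {1..n}" using a i(2) km unfolding fX_def by simp
    qed
    show ?thesis unfolding path_copies_def cp_def using sm rng by blast
  qed
  have cp_X: "X = Y" if XY: "X \<in> Xs" "Y \<in> Xs" "E \<in> cp X" "E \<in> cp Y" for X Y E
  proof -
    obtain j where j: "E = fX X ` {j..<j+r}" using XY(3) unfolding cp_def by blast
    obtain j' where j': "E = fX Y ` {j'..<j'+r}" using XY(4) unfolding cp_def by blast
    have "X = (\<lambda>y. (y - 1) mod m + 1) ` E" unfolding j using img[OF XY(1)] by simp
    also have "\<dots> = Y" unfolding j' using img[OF XY(2)] by simp
    finally show ?thesis .
  qed
  have rs: "r \<le> s" unfolding s using k by simp
  have cp_ne: "fX X ` {0..<0+r} \<in> cp X" for X unfolding cp_def using rs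
    by (intro CollectI exI[of _ 0]) simp
  have inj: "inj_on cp Xs"
  proof (rule inj_onI)
    fix X Y assume "X \<in> Xs" "Y \<in> Xs" "cp X = cp Y"
    then show "X = Y" using cp_X[of X Y "fX X ` {0..<0+r}"] cp_ne[of X] by simp
  qed
  define C where "C = cp ` Xs"
  have C1: "C \<subseteq> path_copies n r s" unfolding C_def using cp_in by blast
  have C2: "\<forall>A\<in>C. \<forall>B\<in>C. A \<noteq> B \<longrightarrow> A \<inter> B = {}"
  proof (intro ballI impI)
    fix A B assume A: "A \<in> C" and B: "B \<in> C" and ne: "A \<noteq> B"
    from A obtain X where X: "X \<in> Xs" "A = cp X" unfolding C_def by blast
    from B obtain Y where Y: "Y \<in> Xs" "B = cp Y" unfolding C_def by blast
    show "A \<inter> B = {}"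
    proof (rule ccontr)
      assume "A \<inter> B \<noteq> {}"
      then obtain E where "E \<in> A" "E \<in> B" by blast
      then have "X = Y" using cp_X[OF X(1) Y(1)] X(2) Y(2) by simp
      then show False using ne X(2) Y(2) by simp
    qed
  qed
  have cC: "card C = m choose r"
  proof -
    have "card C = card Xs" unfolding C_def by (rule card_image[OF inj])
    also have "\<dots> = m choose r" unfolding Xs_def using n_subsets[of "{1..m}" r] by simp
    finally show ?thesis .
  qed
  let ?S = "{card C | C. C \<subseteq> path_copies n r s \<and>
      (\<forall>A\<in>C. \<forall>B\<in>C. A \<noteq> B \<longrightarrow> A \<inter> B = {})}"
  have fin: "finite ?S"
  proof (rule finite_subset[of _ "card ` Pow (path_copies n r s)"])
    show "?S \<subseteq> card ` Pow (path_copies n r s)" by blast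
    show "finite (card ` Pow (path_copies n r s))" using finite_paths by simp
  qed
  have "card C \<in> ?S" using C1 C2 by (intro CollectI exI[of _ C]) simp
  then have "card C \<le> nu_path n r s" unfolding nu_path_def by (rule Max_ge[OF fin])
  then show ?thesis using cC unfolding m_def by simp
qed


theorem theorem3p3:
  fixes r s :: nat
  assumes "0 < r" and "0 < s" and "r dvd s"
  shows "(\<lambda>n. real (nu_path n r s) / real (n choose r))
           \<longlonglongrightarrow> (real r / real s) ^ r \<and>
         (\<lambda>n. nu_star_path n r s / real (n choose r))
           \<longlonglongrightarrow> (real r / real s) ^ r \<and>
         (\<lambda>n. tau_star_path n r s / real (n choose r))
           \<longlonglongrightarrow> (real r / real s) ^ r"
proof -
  obtain k where sk: "s = r * k" using assms(3) by (auto simp: dvd_def)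
  have s': "s = k * r" using sk by simp
  have k: "0 < k" using assms(2) sk by (cases k) auto
  have rs: "r \<le> s" using sk k by simp
  have q: "real r / real s = 1 / real k" using assms(1) sk by simp
  define D where "D n = real (n choose r)" for n
  have D0: "0 \<le> D n" for n unfolding D_def by simp
  have L1: "(\<lambda>n. real ((n div k + 0) choose r) / D n) \<longlonglongrightarrow> (real r / real s) ^ r"
    unfolding q D_def by (rule choose_ratio_lim[OF k])
  have L2: "(\<lambda>n. real ((n div k + 1) choose r) / D n) \<longlonglongrightarrow> (real r / real s) ^ r"
    unfolding q D_def by (rule choose_ratio_lim[OF k])
  have b1: "real ((n div k + 0) choose r) \<le> real (nu_path n r s)" for n
    using nu_lower[OF assms(1) k s', of n] by simp
  have b2: "real (nu_path n r s) \<le> nu_star_path n r s" for n by (rule nu_le_nu_star[OF rs])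
  have b3: "nu_star_path n r s \<le> tau_star_path n r s" for n by (rule nu_star_le_tau_star[OF rs])
  have b4: "tau_star_path n r s \<le> real ((n div k + 1) choose r)" for n
    by (rule tau_upper[OF assms(1) k s'])
  have T1: "(\<lambda>n. real (nu_path n r s) / D n) \<longlonglongrightarrow> (real r / real s) ^ r"
  proof (rule tendsto_sandwich[OF _ _ L1 L2])
    show "\<forall>\<^sub>F n in sequentially. real ((n div k + 0) choose r) / D n \<le> real (nu_path n r s) / D n"
      using b1 D0 by (intro always_eventually allI divide_right_mono)
    show "\<forall>\<^sub>F n in sequentially. real (nu_path n r s) / D n \<le> real ((n div k + 1) choose r) / D n"
    proof (intro always_eventually allI divide_right_mono D0)
      fix n show "real (nu_path n r s) \<le> real ((n div k + 1) choose r)"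
        using b2[of n] b3[of n] b4[of n] by linarith
    qed
  qed
  have T2: "(\<lambda>n. nu_star_path n r s / D n) \<longlonglongrightarrow> (real r / real s) ^ r"
  proof (rule tendsto_sandwich[OF _ _ L1 L2])
    show "\<forall>\<^sub>F n in sequentially. real ((n div k + 0) choose r) / D n \<le> nu_star_path n r s / D n"
    proof (intro always_eventually allI divide_right_mono D0)
      fix n show "real ((n div k + 0) choose r) \<le> nu_star_path n r s"
        using b1[of n] b2[of n] by linarith
    qed
    show "\<forall>\<^sub>F n in sequentially. nu_star_path n r s / D n \<le> real ((n div k + 1) choose r) / D n"
    proof (intro always_eventually allI divide_right_mono D0)
      fix n show "nu_star_path n r s \<le> real ((n div k + 1) choose r)"
        using b3[of n] b4[of n] by linarith
    qed
  qed
  have T3: "(\<lambda>n. tau_star_path n r s / D n) \<longlonglongrightarrow> (real r / real s) ^ r"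
  proof (rule tendsto_sandwich[OF _ _ L1 L2])
    show "\<forall>\<^sub>F n in sequentially. real ((n div k + 0) choose r) / D n \<le> tau_star_path n r s / D n"
    proof (intro always_eventually allI divide_right_mono D0)
      fix n show "real ((n div k + 0) choose r) \<le> tau_star_path n r s"
        using b1[of n] b2[of n] b3[of n] by linarith
    qed
    show "\<forall>\<^sub>F n in sequentially. tau_star_path n r s / D n \<le> real ((n div k + 1) choose r) / D n"
      using b4 D0 by (intro always_eventually allI divide_right_mono)
  qed
  show ?thesis using T1 T2 T3 unfolding D_def by blast
qed

end
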